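(* Let $B$ be a Boolean algebra with more than two elements, regarded as a commutative semiring with $+=\vee$, $\cdot=\wedge$, zero the least element $0$ and unit the greatest element $1$. Let $G=\langle g\mid g^n=1\rangle$ be a finite cyclic group of order $n\ge 2$, and let $BG$ be the group semiring of $G$ over $B$. Then for every $h\in G$ there exist $\alpha,\beta\in BG\setminus G$ such that $\alpha\beta=h$.
   Context: For a commutative semiring $S$ with unit $1$ and a multiplicative group $G$, the group semiring $SG$ is the set of finite formal sums $\sum_i s_i g_i$ ($s_i\in S$, $g_i\in G$), i.e. finitely supported functions $G\to S$, with coefficientwise addition $\sum_i s_ig_i+\sum_i t_ig_i=\sum_i(s_i+t_i)g_i$ and multiplication $\big(\sum_i s_ig_i\big)\big(\sum_j t_jh_j\big)=\sum_{k\in G}\Big(\sum_{g_ih_j=k}s_it_j\Big)k$. The group $G$ is identified with the subset $\{1\cdot g: g\in G\}\subseteq SG$. *)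

theory Defs
  imports Main
begin

text \<open>The cyclic group G = <g | g^n = 1> is represented by exponents {0..<n},
  with g^i * g^j = g^((i+j) mod n).  An element of the group semiring BG
  (B a Boolean algebra, + = sup, * = inf, 0 = bot, 1 = top) is a function
  nat => B that vanishes (is bot) outside {0..<n}; its value at i is the
  coefficient of g^i.\<close>

definition gs_carrier :: "nat \<Rightarrow> (nat \<Rightarrow> 'a::boolean_algebra) set" where
  "gs_carrier n = {f. \<forall>i. n \<le> i \<longrightarrow> f i = bot}"

text \<open>Convolution product: coefficient of g^k is the join over all i<n of
  a_i * b_j with j the unique exponent such that g^i g^j = g^k.\<close>
definition gs_mult :: "nat \<Rightarrow> (nat \<Rightarrow> 'a::boolean_algebra) \<Rightarrow> (nat \<Rightarrow> 'a) \<Rightarrow> nat \<Rightarrow> 'a" where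
  "gs_mult n a b k =
     (if k < n then foldr sup [inf (a i) (b ((k + n - i) mod n)). i \<leftarrow> [0..<n]] bot else bot)"

definition gs_elem :: "nat \<Rightarrow> nat \<Rightarrow> nat \<Rightarrow> 'a::boolean_algebra" where
  "gs_elem n k = (\<lambda>i. if i = k then top else bot)"

definition gs_group :: "nat \<Rightarrow> (nat \<Rightarrow> 'a::boolean_algebra) set" where
  "gs_group n = gs_elem n ` {..<n}"

end

theory Submission
  imports Defs
begin

lemma foldr_sup_bot:
  "(\<forall>i\<in>set xs. f i = (bot::'a::boolean_algebra)) \<Longrightarrow> foldr sup (map f xs) bot = bot"
  by (induction xs) auto

lemma upt_two: "2 \<le> n \<Longrightarrow> [0..<n] = 0 # 1 # [2..<n]"
  by (metis One_nat_def Suc_1 Suc_le_lessD le_SucE le_add_diff_inverse2 less_trans_Suc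
      nat_less_le numeral_le_iff semiring_norm(69) upt_conv_Cons zero_less_Suc Suc_leD upt_rec)

theorem theorem2p5p1:
  fixes n h :: nat
  assumes "n \<ge> 2"
    and "\<exists>x y z :: 'a::boolean_algebra. x \<noteq> y \<and> y \<noteq> z \<and> x \<noteq> z"
    and "h < n"
  shows "\<exists>\<alpha> \<beta> :: nat \<Rightarrow> 'a.
           \<alpha> \<in> gs_carrier n \<and> \<beta> \<in> gs_carrier n \<and>
           \<alpha> \<notin> gs_group n \<and> \<beta> \<notin> gs_group n \<and>
           gs_mult n \<alpha> \<beta> = gs_elem n h"
proof -
  obtain a :: 'a where a1: "a \<noteq> bot" and a2: "a \<noteq> top"
    using assms(2) by metis
  define hm where "hm = (h + n - 1) mod n"
  have hm: "hm < n" "hm \<noteq> h" using assms(1,3) unfolding hm_def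
    by (auto simp: mod_if split: if_splits)
  define \<alpha> :: "nat \<Rightarrow> 'a" where "\<alpha> i = (if i = 0 then a else if i = 1 then - a else bot)" for i
  define \<beta> :: "nat \<Rightarrow> 'a" where "\<beta> i = (if i = h then a else if i = hm then - a else bot)" for i
  have c1: "\<alpha> \<in> gs_carrier n" using assms(1) by (auto simp: gs_carrier_def \<alpha>_def)
  have c2: "\<beta> \<in> gs_carrier n" using assms(3) hm by (auto simp: gs_carrier_def \<beta>_def)
  have g1: "\<alpha> \<notin> gs_group n"
  proof
    assume "\<alpha> \<in> gs_group n"
    then obtain k where "\<alpha> = gs_elem n k" by (auto simp: gs_group_def)
    then have "\<alpha> 0 = gs_elem n k 0" by simp
    then show False using a1 a2 by (auto simp: \<alpha>_def gs_elem_def split: if_splits)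
  qed
  have g2: "\<beta> \<notin> gs_group n"
  proof
    assume "\<beta> \<in> gs_group n"
    then obtain k where "\<beta> = gs_elem n k" by (auto simp: gs_group_def)
    then have "\<beta> h = gs_elem n k h" by simp
    then show False using a1 a2 by (auto simp: \<beta>_def gs_elem_def split: if_splits)
  qed
  have m: "gs_mult n \<alpha> \<beta> k = gs_elem n h k" for k
  proof (cases "k < n")
    case False
    then show ?thesis using assms(3) by (auto simp: gs_mult_def gs_elem_def)
  next
    case True
    have rest: "foldr sup (map (\<lambda>i. inf (\<alpha> i) (\<beta> ((k + n - i) mod n))) [2..<n]) bot = bot"
      by (rule foldr_sup_bot) (auto simp: \<alpha>_def)
    have e0: "(k + n - 0) mod n = k" using True by simp
    have e1: "((k + n - 1) mod n = h) = (k = (h + 1) mod n)"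
      using True assms(1,3) by (auto simp: mod_if split: if_splits)
    have e2: "((k + n - 1) mod n = hm) = (k = h)"
      using True assms(1,3) unfolding hm_def by (auto simp: mod_if split: if_splits)
    have e3: "(k = hm) \<longrightarrow> k \<noteq> h" using hm by auto
    have "gs_mult n \<alpha> \<beta> k = sup (inf a (\<beta> k)) (sup (inf (- a) (\<beta> ((k + n - 1) mod n))) bot)"
      using True assms(1) rest by (simp add: gs_mult_def upt_two \<alpha>_def)
    also have "\<dots> = gs_elem n h k"
      using e1 e2 e3 hm by (auto simp: \<beta>_def gs_elem_def inf_compl_bot compl_inf_bot)
    finally show ?thesis .
  qed
  show ?thesis using c1 c2 g1 g2 m by blast
qed

end
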